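(* Let $G$ be a nilpotent group in which every non-abelian subgroup $H$ satisfies $C_G(H)\le H$. Then $G$ is abelian or finite.
   Context: $C_G(H)$ denotes the centralizer of $H$ in $G$. The class of groups in which every non-abelian subgroup contains its own centralizer is denoted $\mathfrak A$ in the paper. *)

theory Defs
  imports "HOL-Algebra.Algebra"
begin

definition commutator_subgroup :: "('a, 'b) monoid_scheme \<Rightarrow> 'a set \<Rightarrow> 'a set \<Rightarrow> 'a set" where
  "commutator_subgroup G A B = generate G
     (\<Union>a \<in> A. \<Union>b \<in> B. {a \<otimes>\<^bsub>G\<^esub> b \<otimes>\<^bsub>G\<^esub> inv\<^bsub>G\<^esub> a \<otimes>\<^bsub>G\<^esub> inv\<^bsub>G\<^esub> b})"

fun lower_central :: "('a, 'b) monoid_scheme \<Rightarrow> nat \<Rightarrow> 'a set" where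
  "lower_central G 0 = carrier G"
| "lower_central G (Suc n) = commutator_subgroup G (lower_central G n) (carrier G)"

definition nilpotent_group :: "('a, 'b) monoid_scheme \<Rightarrow> bool" where
  "nilpotent_group G \<longleftrightarrow> group G \<and> (\<exists>n. lower_central G n = {\<one>\<^bsub>G\<^esub>})"

definition centralizer :: "('a, 'b) monoid_scheme \<Rightarrow> 'a set \<Rightarrow> 'a set" where
  "centralizer G H = {g \<in> carrier G. \<forall>h \<in> H. g \<otimes>\<^bsub>G\<^esub> h = h \<otimes>\<^bsub>G\<^esub> g}"

definition abelian_set :: "('a, 'b) monoid_scheme \<Rightarrow> 'a set \<Rightarrow> bool" where
  "abelian_set G H \<longleftrightarrow> (\<forall>x \<in> H. \<forall>y \<in> H. x \<otimes>\<^bsub>G\<^esub> y = y \<otimes>\<^bsub>G\<^esub> x)"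

end

theory Submission
  imports Defs "HOL-Algebra.Multiplicative_Group"
begin


context group begin

lemma Kgen_nat:
  assumes u: "u \<in> carrier G" and y: "y \<in> carrier G" and d: "d \<in> carrier G"
    and dc: "\<And>g. g \<in> carrier G \<Longrightarrow> d \<otimes> g = g \<otimes> d"
    and r: "u \<otimes> y = d \<otimes> y \<otimes> u"
  shows "u [^] (n::nat) \<otimes> y = d [^] n \<otimes> y \<otimes> u [^] n"
proof (induction n)
  case 0 then show ?case using y by simp
next
  case (Suc n)
  have "u [^] Suc n \<otimes> y = u [^] n \<otimes> (u \<otimes> y)" using u y by (simp add: m_assoc)
  also have "\<dots> = (u [^] n \<otimes> d) \<otimes> y \<otimes> u" using u y d r by (simp add: m_assoc)
  also have "\<dots> = d \<otimes> (u [^] n \<otimes> y) \<otimes> u" using u y d dc[of "u [^] n", symmetric] by (simp add: m_assoc[symmetric])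
  also have "\<dots> = (d \<otimes> d [^] n) \<otimes> y \<otimes> (u [^] n \<otimes> u)" using Suc u y d by (simp add: m_assoc)
  also have "\<dots> = d [^] Suc n \<otimes> y \<otimes> u [^] Suc n" using u d dc[of "d [^] n"] by simp
  finally show ?case .
qed

lemma inv_twist:
  assumes u: "u \<in> carrier G" and y: "y \<in> carrier G" and d: "d \<in> carrier G"
    and dc: "\<And>g. g \<in> carrier G \<Longrightarrow> d \<otimes> g = g \<otimes> d"
    and r: "u \<otimes> y = d \<otimes> y \<otimes> u"
  shows "inv u \<otimes> y = inv d \<otimes> y \<otimes> inv u"
proof -
  have "inv u \<otimes> (u \<otimes> y) \<otimes> inv u = y \<otimes> inv u" using u y by (simp add: m_assoc[symmetric])
  also have "inv u \<otimes> (u \<otimes> y) \<otimes> inv u = inv u \<otimes> (d \<otimes> y \<otimes> u) \<otimes> inv u" using r by simp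
  also have "\<dots> = d \<otimes> (inv u \<otimes> y)" using u y d dc[of "inv u", symmetric] by (simp add: m_assoc[symmetric]) (simp add: m_assoc)
  finally have e: "d \<otimes> (inv u \<otimes> y) = y \<otimes> inv u" .
  have "inv u \<otimes> y = inv d \<otimes> (d \<otimes> (inv u \<otimes> y))" using u y d by (simp add: m_assoc[symmetric])
  also have "\<dots> = inv d \<otimes> y \<otimes> inv u" using e u y d by (simp add: m_assoc)
  finally show ?thesis .
qed

lemma Kgen:
  assumes u: "u \<in> carrier G" and y: "y \<in> carrier G" and d: "d \<in> carrier G"
    and dc: "\<And>g. g \<in> carrier G \<Longrightarrow> d \<otimes> g = g \<otimes> d"
    and r: "u \<otimes> y = d \<otimes> y \<otimes> u"
  shows "u [^] (i::int) \<otimes> y = d [^] i \<otimes> y \<otimes> u [^] i"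
proof (cases "i \<ge> 0")
  case True
  then obtain n where "i = int n" by (metis nonneg_eq_int)
  then show ?thesis using Kgen_nat[OF assms] by (simp add: int_pow_int)
next
  case False
  then obtain n where i: "i = - int n" by (metis neg_int_cases less_le not_le minus_minus)
  have dnc: "\<And>g. g \<in> carrier G \<Longrightarrow> d [^] n \<otimes> g = g \<otimes> d [^] n"
    using Kgen_nat[OF d _ one_closed, of _ n] dc by (simp add: m_assoc)
  show ?thesis using inv_twist[OF nat_pow_closed[OF u] y nat_pow_closed[OF d] dnc Kgen_nat[OF assms]]
    i u d by (simp add: int_pow_neg_int)
qed

lemma central_pow:
  assumes d: "d \<in> carrier G" and dc: "\<And>g. g \<in> carrier G \<Longrightarrow> d \<otimes> g = g \<otimes> d"
    and g: "g \<in> carrier G"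
  shows "d [^] (i::int) \<otimes> g = g \<otimes> d [^] i"
  using Kgen[OF d g one_closed, of i] dc g d by simp

lemma Kfull:
  assumes x: "x \<in> carrier G" and y: "y \<in> carrier G" and c: "c \<in> carrier G"
    and cc: "\<And>g. g \<in> carrier G \<Longrightarrow> c \<otimes> g = g \<otimes> c"
    and r: "x \<otimes> y = c \<otimes> y \<otimes> x"
  shows "x [^] (i::int) \<otimes> y [^] (j::int) = c [^] (i*j) \<otimes> y [^] j \<otimes> x [^] i"
proof -
  define x' where "x' = x [^] i"
  define d where "d = c [^] i"
  have x': "x' \<in> carrier G" and d: "d \<in> carrier G" using x c by (auto simp: x'_def d_def)
  have dc: "\<And>g. g \<in> carrier G \<Longrightarrow> d \<otimes> g = g \<otimes> d" unfolding d_def by (rule central_pow[OF c cc])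
  have idc: "\<And>g. g \<in> carrier G \<Longrightarrow> inv d \<otimes> g = g \<otimes> inv d"
  proof -
    fix g assume g: "g \<in> carrier G"
    have "d [^] (-1::int) \<otimes> g = g \<otimes> d [^] (-1::int)" by (rule central_pow[OF d dc g])
    then show "inv d \<otimes> g = g \<otimes> inv d" using d by (simp add: int_pow_neg)
  qed
  have r1: "x' \<otimes> y = d \<otimes> y \<otimes> x'" unfolding x'_def d_def by (rule Kgen[OF x y c cc r])
  have r2: "y \<otimes> x' = inv d \<otimes> x' \<otimes> y"
  proof -
    have "inv d \<otimes> x' \<otimes> y = inv d \<otimes> (d \<otimes> y \<otimes> x')" using r1 x' y d by (simp add: m_assoc)
    also have "\<dots> = y \<otimes> x'" using x' y d by (simp add: m_assoc[symmetric])
    finally show ?thesis by simp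
  qed
  have r3: "y [^] j \<otimes> x' = (inv d) [^] j \<otimes> x' \<otimes> y [^] j"
    by (rule Kgen[OF y x' inv_closed[OF d] idc r2])
  have r4: "(inv d) [^] j = inv (d [^] j)" using d by (simp add: int_pow_inv)
  have "d [^] j \<otimes> y [^] j \<otimes> x' = d [^] j \<otimes> (y [^] j \<otimes> x')" using d y x' by (simp add: m_assoc)
  also have "\<dots> = x' \<otimes> y [^] j" using r3 r4 d y x' by (simp add: m_assoc[symmetric])
  finally have "x' \<otimes> y [^] j = d [^] j \<otimes> y [^] j \<otimes> x'" by simp
  then show ?thesis using c by (simp add: x'_def d_def int_pow_pow)
qed


lemma rearr:
  assumes U1: "U1 \<in> carrier G" and V1: "V1 \<in> carrier G" and W1: "W1 \<in> carrier G"
    and U2: "U2 \<in> carrier G" and V2: "V2 \<in> carrier G" and W2: "W2 \<in> carrier G" and D: "D \<in> carrier G"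
    and Wc: "\<And>g. g \<in> carrier G \<Longrightarrow> W2 \<otimes> g = g \<otimes> W2"
    and Dc: "\<And>g. g \<in> carrier G \<Longrightarrow> D \<otimes> g = g \<otimes> D"
    and sw: "V1 \<otimes> U2 = D \<otimes> U2 \<otimes> V1"
  shows "W1 \<otimes> U1 \<otimes> V1 \<otimes> (W2 \<otimes> U2 \<otimes> V2) = (W1 \<otimes> W2 \<otimes> D) \<otimes> (U1 \<otimes> U2) \<otimes> (V1 \<otimes> V2)"
proof -
  have e2: "(U1 \<otimes> V1) \<otimes> W2 = W2 \<otimes> (U1 \<otimes> V1)" using Wc U1 V1 by simp
  have e4: "U1 \<otimes> D = D \<otimes> U1" using Dc U1 by simp
  have "W1 \<otimes> U1 \<otimes> V1 \<otimes> (W2 \<otimes> U2 \<otimes> V2) = W1 \<otimes> ((U1 \<otimes> V1) \<otimes> W2) \<otimes> U2 \<otimes> V2"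
    using U1 V1 W1 U2 V2 W2 D by (simp add: m_assoc)
  also have "\<dots> = W1 \<otimes> (W2 \<otimes> (U1 \<otimes> V1)) \<otimes> U2 \<otimes> V2" by (simp only: e2)
  also have "\<dots> = W1 \<otimes> W2 \<otimes> U1 \<otimes> (V1 \<otimes> U2) \<otimes> V2" using U1 V1 W1 U2 V2 W2 D by (simp add: m_assoc)
  also have "\<dots> = W1 \<otimes> W2 \<otimes> U1 \<otimes> (D \<otimes> U2 \<otimes> V1) \<otimes> V2" by (simp only: sw)
  also have "\<dots> = W1 \<otimes> W2 \<otimes> (U1 \<otimes> D) \<otimes> U2 \<otimes> V1 \<otimes> V2" using U1 V1 W1 U2 V2 W2 D by (simp add: m_assoc)
  also have "\<dots> = W1 \<otimes> W2 \<otimes> (D \<otimes> U1) \<otimes> U2 \<otimes> V1 \<otimes> V2" by (simp only: e4)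
  also have "\<dots> = (W1 \<otimes> W2 \<otimes> D) \<otimes> (U1 \<otimes> U2) \<otimes> (V1 \<otimes> V2)" using U1 V1 W1 U2 V2 W2 D by (simp add: m_assoc)
  finally show ?thesis .
qed

definition NFset :: "'a \<Rightarrow> 'a \<Rightarrow> 'a \<Rightarrow> 'a set" where
  "NFset x y c = {c [^] (k::int) \<otimes> x [^] (i::int) \<otimes> y [^] (j::int) | i j k. True}"

lemma normfin:
  assumes Hs: "subgroup H G" and Hf: "finite H" and cent: "centralizer G H \<subseteq> H"
    and Kc: "K \<subseteq> carrier G" and Kn: "\<And>g h. g \<in> K \<Longrightarrow> h \<in> H \<Longrightarrow> g \<otimes> h \<otimes> inv g \<in> H"
  shows "finite K"
proof -
  interpret H: subgroup H G by (rule Hs)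
  define f where "f = (\<lambda>g. restrict (\<lambda>h. g \<otimes> h \<otimes> inv g) H)"
  have fK: "f ` K \<subseteq> H \<rightarrow>\<^sub>E H" using Kn unfolding f_def by auto
  have ffin: "finite (f ` K)" by (rule finite_subset[OF fK finite_PiE[OF Hf]]) (use Hf in auto)
  define R where "R = (\<lambda>\<phi>. SOME g. g \<in> K \<and> f g = \<phi>) ` (f ` K)"
  have Rfin: "finite R" unfolding R_def using ffin by simp
  have "K \<subseteq> (\<lambda>(g, h). g \<otimes> h) ` (R \<times> H)"
  proof
    fix k assume k: "k \<in> K"
    define g where "g = (SOME g. g \<in> K \<and> f g = f k)"
    have "g \<in> K \<and> f g = f k" unfolding g_def by (rule someI_ex) (use k in blast)
    then have g: "g \<in> K" "f g = f k" by auto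
    have gR: "g \<in> R" unfolding R_def g_def using k by blast
    have gc: "g \<in> carrier G" and kc: "k \<in> carrier G" using g k Kc by auto
    have eq: "\<And>h. h \<in> H \<Longrightarrow> g \<otimes> h \<otimes> inv g = k \<otimes> h \<otimes> inv k"
    proof -
      fix h assume h: "h \<in> H"
      from fun_cong[OF g(2), of h] h show "g \<otimes> h \<otimes> inv g = k \<otimes> h \<otimes> inv k" unfolding f_def by simp
    qed
    have "inv g \<otimes> k \<in> centralizer G H"
      unfolding centralizer_def
    proof (intro CollectI conjI ballI)
      show "inv g \<otimes> k \<in> carrier G" using gc kc by simp
      fix h assume h: "h \<in> H"
      have hc: "h \<in> carrier G" using h by auto
      have "inv g \<otimes> k \<otimes> h = inv g \<otimes> (k \<otimes> h \<otimes> inv k) \<otimes> k" using gc kc hc by (simp add: m_assoc)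
      also have "\<dots> = inv g \<otimes> (g \<otimes> h \<otimes> inv g) \<otimes> k" using eq[OF h] by simp
      also have "\<dots> = h \<otimes> (inv g \<otimes> k)" using gc kc hc by (simp add: m_assoc[symmetric])
      finally show "inv g \<otimes> k \<otimes> h = h \<otimes> (inv g \<otimes> k)" .
    qed
    then have "inv g \<otimes> k \<in> H" using cent by blast
    moreover have "k = g \<otimes> (inv g \<otimes> k)" using gc kc by (simp add: m_assoc[symmetric])
    ultimately show "k \<in> (\<lambda>(g, h). g \<otimes> h) ` (R \<times> H)" using gR
      by (intro image_eqI[where x="(g, inv g \<otimes> k)"]) auto
  qed
  then show ?thesis by (rule finite_subset) (use Rfin Hf in auto)
qed

lemma lc_sub: "subgroup (lower_central G n) G"
proof (induction n)
  case 0 then show ?case by (simp add: subgroup_self)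
next
  case (Suc n)
  interpret S: subgroup "lower_central G n" G by (rule Suc)
  show ?case unfolding lower_central.simps commutator_subgroup_def
    by (rule generate_is_subgroup) auto
qed

lemma lc_carrier: "lower_central G n \<subseteq> carrier G"
  using lc_sub subgroup.subset by blast

lemma lc_conj:
  assumes g: "g \<in> lower_central G n" and h: "h \<in> carrier G"
  shows "g \<otimes> h \<otimes> inv g \<otimes> inv h \<in> lower_central G (Suc n)"
  unfolding lower_central.simps commutator_subgroup_def
  by (rule generate.incl) (use g h in blast)

lemma abelian_mono: "\<not> abelian_set G A \<Longrightarrow> A \<subseteq> B \<Longrightarrow> \<not> abelian_set G B"
  unfolding abelian_set_def by blast

lemma chain_step:
  assumes H0s: "subgroup H0 G" and H0n: "\<not> abelian_set G H0"
    and hyp: "\<And>H. subgroup H G \<Longrightarrow> \<not> abelian_set G H \<Longrightarrow> centralizer G H \<subseteq> H"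
    and fin: "finite (generate G (H0 \<union> lower_central G (Suc i)))"
  shows "finite (generate G (H0 \<union> lower_central G i))"
proof -
  define L where "L = generate G (H0 \<union> lower_central G (Suc i))"
  have H0c: "H0 \<subseteq> carrier G" using H0s subgroup.subset by blast
  have sub: "H0 \<union> lower_central G i \<subseteq> carrier G" using H0c lc_carrier by blast
  have Lsub: "subgroup L G" unfolding L_def by (intro generate_is_subgroup) (use H0c lc_carrier in blast)
  interpret L: subgroup L G by (rule Lsub)
  have H0L: "H0 \<subseteq> L" unfolding L_def by (auto intro: generate.incl)
  have lcL: "lower_central G (Suc i) \<subseteq> L" unfolding L_def by (auto intro: generate.incl)
  have Lcent: "centralizer G L \<subseteq> L" by (rule hyp[OF Lsub abelian_mono[OF H0n H0L]])
  have conj_lc: "g \<otimes> h \<otimes> inv g \<in> L" if g: "g \<in> lower_central G i" and h: "h \<in> L" for g h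
  proof -
    have gc: "g \<in> carrier G" using g lc_carrier by blast
    have hc: "h \<in> carrier G" using h by auto
    have "g \<otimes> h \<otimes> inv g \<otimes> inv h \<in> L" using lc_conj[OF g hc] lcL by blast
    then have "(g \<otimes> h \<otimes> inv g \<otimes> inv h) \<otimes> h \<in> L" using h by blast
    moreover have "(g \<otimes> h \<otimes> inv g \<otimes> inv h) \<otimes> h = g \<otimes> h \<otimes> inv g" using gc hc by (simp add: m_assoc)
    ultimately show ?thesis by simp
  qed
  have main: "\<forall>h \<in> L. g \<otimes> h \<otimes> inv g \<in> L" if "g \<in> generate G (H0 \<union> lower_central G i)" for g
    using that
  proof (induction rule: generate.induct)
    case one then show ?case by auto
  next
    case (incl g)
    then show ?case
    proof
      assume "g \<in> H0" then have "g \<in> L" using H0L by blast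
      then show ?thesis by auto
    next
      assume "g \<in> lower_central G i" then show ?thesis using conj_lc by blast
    qed
  next
    case (inv g)
    then show ?case
    proof
      assume "g \<in> H0" then have "g \<in> L" using H0L by blast
      then show ?thesis by auto
    next
      assume "g \<in> lower_central G i"
      then have "inv g \<in> lower_central G i" by (rule subgroup.m_inv_closed[OF lc_sub])
      then show ?thesis using conj_lc by blast
    qed
  next
    case (eng g1 g2)
    have c1: "g1 \<in> carrier G" and c2: "g2 \<in> carrier G"
      using generate_in_carrier[OF sub eng.hyps(1)] generate_in_carrier[OF sub eng.hyps(2)] by auto
    show ?case
    proof
      fix h assume h: "h \<in> L"
      have hc: "h \<in> carrier G" using h by auto
      have "g1 \<otimes> (g2 \<otimes> h \<otimes> inv g2) \<otimes> inv g1 \<in> L" using eng.IH h by blast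
      moreover have "g1 \<otimes> (g2 \<otimes> h \<otimes> inv g2) \<otimes> inv g1 = g1 \<otimes> g2 \<otimes> h \<otimes> inv (g1 \<otimes> g2)"
        using c1 c2 hc by (simp add: m_assoc inv_mult_group)
      ultimately show "g1 \<otimes> g2 \<otimes> h \<otimes> inv (g1 \<otimes> g2) \<in> L" by simp
    qed
  qed
  show ?thesis
    apply (rule normfin[OF Lsub fin[folded L_def] Lcent])
    apply (rule generate_incl[OF sub])
    using main by blast
qed



lemma chain_final:
  assumes H0s: "subgroup H0 G" and H0n: "\<not> abelian_set G H0" and H0f: "finite H0"
    and hyp: "\<And>H. subgroup H G \<Longrightarrow> \<not> abelian_set G H \<Longrightarrow> centralizer G H \<subseteq> H"
    and nil: "lower_central G n = {\<one>}"
  shows "finite (carrier G)"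
proof -
  have H0c: "H0 \<subseteq> carrier G" using H0s subgroup.subset by blast
  have base: "finite (generate G (H0 \<union> lower_central G n))"
  proof -
    have "generate G (H0 \<union> lower_central G n) \<subseteq> H0"
      using nil H0s subgroup.one_closed by (intro generate_subgroup_incl) auto
    then show ?thesis using H0f finite_subset by blast
  qed
  have "finite (generate G (H0 \<union> lower_central G (n - d)))" if "d \<le> n" for d
    using that
  proof (induction d)
    case 0 then show ?case using base by simp
  next
    case (Suc d)
    then have "finite (generate G (H0 \<union> lower_central G (Suc (n - Suc d))))"
      by (simp add: Suc_diff_Suc)
    then show ?case using chain_step[OF H0s H0n hyp, of "n - Suc d"] by blast
  qed
  from this[of n] have "finite (generate G (H0 \<union> carrier G))" by simp
  moreover have "carrier G \<subseteq> generate G (H0 \<union> carrier G)" by (auto intro: generate.incl)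
  ultimately show ?thesis using finite_subset by blast
qed



end

context group begin
lemma swapg:
  assumes x: "x \<in> carrier G" and y: "y \<in> carrier G" and d: "d \<in> carrier G"
    and dc: "\<And>g. g \<in> carrier G \<Longrightarrow> d \<otimes> g = g \<otimes> d"
    and r: "x \<otimes> y = d \<otimes> y \<otimes> x"
  shows "y [^] (j::int) \<otimes> x [^] (i::int) = d [^] (-(i*j)) \<otimes> x [^] i \<otimes> y [^] j"
proof -
  have K: "x [^] i \<otimes> y [^] j = d [^] (i*j) \<otimes> y [^] j \<otimes> x [^] i" by (rule Kfull[OF x y d dc r])
  have "d [^] (-(i*j)) \<otimes> x [^] i \<otimes> y [^] j = d [^] (-(i*j)) \<otimes> (x [^] i \<otimes> y [^] j)"
    using x y d by (simp add: m_assoc)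
  also have "\<dots> = (d [^] (-(i*j)) \<otimes> d [^] (i*j)) \<otimes> y [^] j \<otimes> x [^] i"
    using K x y d by (simp add: m_assoc)
  also have "d [^] (-(i*j)) \<otimes> d [^] (i*j) = \<one>" using d by (simp flip: int_pow_mult)
  finally show ?thesis using x y by simp
qed

lemma NFmul:
  assumes x: "x \<in> carrier G" and y: "y \<in> carrier G" and c: "c \<in> carrier G" and d: "d \<in> carrier G"
    and cc: "\<And>g. g \<in> carrier G \<Longrightarrow> c \<otimes> g = g \<otimes> c"
    and dc: "\<And>g. g \<in> carrier G \<Longrightarrow> d \<otimes> g = g \<otimes> d"
    and r: "x \<otimes> y = d \<otimes> y \<otimes> x"
  shows "(c [^] (k::int) \<otimes> x [^] (i::int) \<otimes> y [^] (j::int)) \<otimes> (c [^] (k'::int) \<otimes> x [^] (i'::int) \<otimes> y [^] (j'::int))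
     = (c [^] (k + k') \<otimes> d [^] (-(i'*j))) \<otimes> x [^] (i + i') \<otimes> y [^] (j + j')"
proof -
  have "(c [^] k \<otimes> x [^] i \<otimes> y [^] j) \<otimes> (c [^] k' \<otimes> x [^] i' \<otimes> y [^] j')
     = (c [^] k \<otimes> c [^] k' \<otimes> d [^] (-(i'*j))) \<otimes> (x [^] i \<otimes> x [^] i') \<otimes> (y [^] j \<otimes> y [^] j')"
    by (rule rearr[OF int_pow_closed[OF x] int_pow_closed[OF y] int_pow_closed[OF c] int_pow_closed[OF x]
       int_pow_closed[OF y] int_pow_closed[OF c] int_pow_closed[OF d] central_pow[OF c cc] central_pow[OF d dc]
       swapg[OF x y d dc r]])
  then show ?thesis using x y c d by (simp add: int_pow_mult m_assoc)
qed

lemma NF: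
  assumes x: "x \<in> carrier G" and y: "y \<in> carrier G" and c: "c \<in> carrier G"
    and cc: "\<And>g. g \<in> carrier G \<Longrightarrow> c \<otimes> g = g \<otimes> c"
    and r: "x \<otimes> y = c \<otimes> y \<otimes> x"
  shows "generate G {x, y} \<subseteq> NFset x y c"
proof
  fix h assume "h \<in> generate G {x, y}"
  then show "h \<in> NFset x y c"
  proof (induction rule: generate.induct)
    case one
    have "\<one> = c [^] (0::int) \<otimes> x [^] (0::int) \<otimes> y [^] (0::int)" using x y c by simp
    then show ?case unfolding NFset_def by blast
  next
    case (incl h)
    have "x = c [^] (0::int) \<otimes> x [^] (1::int) \<otimes> y [^] (0::int)"
      and "y = c [^] (0::int) \<otimes> x [^] (0::int) \<otimes> y [^] (1::int)" using x y c by simp_all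
    then show ?case using incl unfolding NFset_def by blast
  next
    case (inv h)
    have "inv x = c [^] (0::int) \<otimes> x [^] (-1::int) \<otimes> y [^] (0::int)"
      and "inv y = c [^] (0::int) \<otimes> x [^] (0::int) \<otimes> y [^] (-1::int)" using x y c by (simp_all add: int_pow_neg)
    then show ?case using inv unfolding NFset_def by blast
  next
    case (eng h1 h2)
    from eng.IH obtain i j k i' j' k' where
      h1: "h1 = c [^] (k::int) \<otimes> x [^] (i::int) \<otimes> y [^] (j::int)" and
      h2: "h2 = c [^] (k'::int) \<otimes> x [^] (i'::int) \<otimes> y [^] (j'::int)"
      unfolding NFset_def by blast
    have "h1 \<otimes> h2 = (c [^] (k + k') \<otimes> c [^] (-(i'*j))) \<otimes> x [^] (i + i') \<otimes> y [^] (j + j')"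
      unfolding h1 h2 by (rule NFmul[OF x y c c cc cc r])
    also have "\<dots> = c [^] (k + k' + -(i'*j)) \<otimes> x [^] (i + i') \<otimes> y [^] (j + j')"
      by (simp only: int_pow_mult[OF c, of "k + k'" "-(i'*j)"])
    finally show ?case unfolding NFset_def by blast
  qed
qed

lemma extractL:
  assumes x: "x \<in> carrier G" and y: "y \<in> carrier G" and c: "c \<in> carrier G"
    and cc: "\<And>g. g \<in> carrier G \<Longrightarrow> c \<otimes> g = g \<otimes> c"
    and r: "x \<otimes> y = c \<otimes> y \<otimes> x"
    and zx: "(c [^] (K::int) \<otimes> x [^] (I::int) \<otimes> y [^] (J::int)) \<otimes> x = x \<otimes> (c [^] K \<otimes> x [^] I \<otimes> y [^] J)"
    and zy: "(c [^] K \<otimes> x [^] I \<otimes> y [^] J) \<otimes> y = y \<otimes> (c [^] K \<otimes> x [^] I \<otimes> y [^] J)"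
  shows "int (ord c) dvd I \<and> int (ord c) dvd J"
proof -
  have ex: "c [^] (0::int) \<otimes> x [^] (1::int) \<otimes> y [^] (0::int) = x"
    and ey: "c [^] (0::int) \<otimes> x [^] (0::int) \<otimes> y [^] (1::int) = y" using x y c by simp_all
  note M = NFmul[OF x y c c cc cc r]
  have e1: "(c [^] K \<otimes> x [^] I \<otimes> y [^] J) \<otimes> (c [^] (0::int) \<otimes> x [^] (1::int) \<otimes> y [^] (0::int))
     = (c [^] (K + 0) \<otimes> c [^] (-(1*J))) \<otimes> x [^] (I + 1) \<otimes> y [^] (J + 0)" by (rule M)
  have e2: "(c [^] (0::int) \<otimes> x [^] (1::int) \<otimes> y [^] (0::int)) \<otimes> (c [^] K \<otimes> x [^] I \<otimes> y [^] J)
     = (c [^] (0 + K) \<otimes> c [^] (-(I*0))) \<otimes> x [^] (1 + I) \<otimes> y [^] (0 + J)" by (rule M)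
  have "(c [^] (K + 0) \<otimes> c [^] (-(1*J))) \<otimes> x [^] (I + 1) \<otimes> y [^] (J + 0)
      = (c [^] (0 + K) \<otimes> c [^] (-(I*0))) \<otimes> x [^] (1 + I) \<otimes> y [^] (0 + J)"
    using zx e1 e2 unfolding ex by simp
  then have "c [^] K \<otimes> c [^] (-J) \<otimes> x [^] (I + 1) \<otimes> y [^] J = c [^] K \<otimes> \<one> \<otimes> x [^] (I + 1) \<otimes> y [^] J"
    using c by (simp add: add.commute)
  then have "c [^] K \<otimes> c [^] (-J) = c [^] K \<otimes> \<one>" using x y c by (simp only: right_cancel int_pow_closed m_closed one_closed)
  then have "c [^] (-J) = \<one>" using c by simp
  then have 1: "int (ord c) dvd J" using c by (simp add: int_pow_eq_id)
  have e3: "(c [^] K \<otimes> x [^] I \<otimes> y [^] J) \<otimes> (c [^] (0::int) \<otimes> x [^] (0::int) \<otimes> y [^] (1::int))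
     = (c [^] (K + 0) \<otimes> c [^] (-(0*J))) \<otimes> x [^] (I + 0) \<otimes> y [^] (J + 1)" by (rule M)
  have e4: "(c [^] (0::int) \<otimes> x [^] (0::int) \<otimes> y [^] (1::int)) \<otimes> (c [^] K \<otimes> x [^] I \<otimes> y [^] J)
     = (c [^] (0 + K) \<otimes> c [^] (-(I*1))) \<otimes> x [^] (0 + I) \<otimes> y [^] (1 + J)" by (rule M)
  have "(c [^] (K + 0) \<otimes> c [^] (-(0*J))) \<otimes> x [^] (I + 0) \<otimes> y [^] (J + 1)
      = (c [^] (0 + K) \<otimes> c [^] (-(I*1))) \<otimes> x [^] (0 + I) \<otimes> y [^] (1 + J)"
    using zy e3 e4 unfolding ey by simp
  then have "c [^] K \<otimes> \<one> \<otimes> x [^] I \<otimes> y [^] (J + 1) = c [^] K \<otimes> c [^] (-I) \<otimes> x [^] I \<otimes> y [^] (J + 1)"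
    using c by (simp add: add.commute)
  then have "c [^] K \<otimes> \<one> = c [^] K \<otimes> c [^] (-I)" using x y c by (simp only: right_cancel int_pow_closed m_closed one_closed)
  then have "c [^] (-I) = \<one>" using c by simp
  then have 2: "int (ord c) dvd I" using c by (simp add: int_pow_eq_id)
  show ?thesis using 1 2 by simp
qed

end

context group begin

lemma comm_pow1:
  assumes u: "u \<in> carrier G" and z: "z \<in> carrier G" and e: "u \<otimes> z = z \<otimes> u"
  shows "u [^] (p::int) \<otimes> z = z \<otimes> u [^] p"
  using Kgen[OF u z one_closed, of p] e u z by simp

lemma cent_gen:
  assumes x: "x \<in> carrier G" and y: "y \<in> carrier G" and z: "z \<in> carrier G"
    and zx: "z \<otimes> x = x \<otimes> z" and zy: "z \<otimes> y = y \<otimes> z"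
  shows "z \<in> centralizer G (generate G {x, y})"
proof -
  have sub: "{x, y} \<subseteq> carrier G" using x y by auto
  have "z \<otimes> h = h \<otimes> z" if "h \<in> generate G {x, y}" for h
    using that
  proof (induction rule: generate.induct)
    case one then show ?case using z by simp
  next
    case (incl h) then show ?case using zx zy by auto
  next
    case (inv h)
    have hc: "h \<in> carrier G" and zh: "z \<otimes> h = h \<otimes> z" using inv x y zx zy by auto
    have "h [^] (-1::int) \<otimes> z = z \<otimes> h [^] (-1::int)" by (rule comm_pow1[OF hc z zh[symmetric]])
    then show ?case using hc z by (simp add: int_pow_neg)
  next
    case (eng h1 h2)
    have c1: "h1 \<in> carrier G" and c2: "h2 \<in> carrier G"
      using generate_in_carrier[OF sub eng.hyps(1)] generate_in_carrier[OF sub eng.hyps(2)] by auto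
    have "z \<otimes> (h1 \<otimes> h2) = (z \<otimes> h1) \<otimes> h2" using c1 c2 z by (simp add: m_assoc)
    also have "\<dots> = h1 \<otimes> (z \<otimes> h2)" using eng.IH c1 c2 z by (simp add: m_assoc)
    also have "\<dots> = h1 \<otimes> h2 \<otimes> z" using eng.IH c1 c2 z by (simp add: m_assoc)
    finally show ?case .
  qed
  then show ?thesis unfolding centralizer_def using z by blast
qed

lemma pairsub:
  assumes hyp: "\<And>H. subgroup H G \<Longrightarrow> \<not> abelian_set G H \<Longrightarrow> centralizer G H \<subseteq> H"
    and x: "x \<in> carrier G" and y: "y \<in> carrier G" and nc: "x \<otimes> y \<noteq> y \<otimes> x"
    and z: "z \<in> carrier G" and zx: "z \<otimes> x = x \<otimes> z" and zy: "z \<otimes> y = y \<otimes> z"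
  shows "z \<in> generate G {x, y}"
proof -
  have sub: "subgroup (generate G {x, y}) G" using x y by (intro generate_is_subgroup) auto
  have "\<not> abelian_set G (generate G {x, y})"
    unfolding abelian_set_def using nc generate.incl[of x "{x,y}" G] generate.incl[of y "{x,y}" G] by blast
  then have "centralizer G (generate G {x, y}) \<subseteq> generate G {x, y}" using hyp sub by blast
  then show ?thesis using cent_gen[OF x y z zx zy] by blast
qed

lemma key:
  assumes hyp: "\<And>H. subgroup H G \<Longrightarrow> \<not> abelian_set G H \<Longrightarrow> centralizer G H \<subseteq> H"
    and a: "a \<in> carrier G" and b: "b \<in> carrier G" and c: "c \<in> carrier G"
    and cc: "\<And>g. g \<in> carrier G \<Longrightarrow> c \<otimes> g = g \<otimes> c"
    and r: "a \<otimes> b = c \<otimes> b \<otimes> a"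
    and cp: "c [^] (p*p) \<noteq> \<one>"
    and z: "z \<in> carrier G" and za: "z \<otimes> a = a \<otimes> z" and zb: "z \<otimes> b = b \<otimes> z"
  shows "\<exists>k i j. z = c [^] (p*p*k) \<otimes> a [^] (p*i) \<otimes> b [^] (p*j) \<and> int (ord c) dvd p*i \<and> int (ord c) dvd p*j"
proof -
  define x where "x = a [^] p"
  define y where "y = b [^] p"
  define d where "d = c [^] (p*p)"
  have xc: "x \<in> carrier G" and yc: "y \<in> carrier G" and dcar: "d \<in> carrier G"
    using a b c by (auto simp: x_def y_def d_def)
  have dc: "\<And>g. g \<in> carrier G \<Longrightarrow> d \<otimes> g = g \<otimes> d" unfolding d_def by (rule central_pow[OF c cc])
  have rxy: "x \<otimes> y = d \<otimes> y \<otimes> x" unfolding x_def y_def d_def by (rule Kfull[OF a b c cc r])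
  have nc: "x \<otimes> y \<noteq> y \<otimes> x"
  proof
    assume "x \<otimes> y = y \<otimes> x"
    then have "d \<otimes> (y \<otimes> x) = y \<otimes> x" using rxy xc yc dcar by (simp add: m_assoc)
    then have "d = \<one>" using xc yc dcar by simp
    then show False using cp d_def by simp
  qed
  have zx: "z \<otimes> x = x \<otimes> z" unfolding x_def using comm_pow1[OF a z] za by simp
  have zy: "z \<otimes> y = y \<otimes> z" unfolding y_def using comm_pow1[OF b z] zb by simp
  have "z \<in> generate G {x, y}" by (rule pairsub[OF hyp xc yc nc z zx zy])
  then have "z \<in> NFset x y d" using NF[OF xc yc dcar dc rxy] by blast
  then obtain k i j where zf: "z = d [^] (k::int) \<otimes> x [^] (i::int) \<otimes> y [^] (j::int)" unfolding NFset_def by blast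
  have zf2: "z = c [^] (p*p*k) \<otimes> a [^] (p*i) \<otimes> b [^] (p*j)"
    using zf a b c by (simp add: x_def y_def d_def int_pow_pow)
  have "int (ord c) dvd p*i \<and> int (ord c) dvd p*j"
    by (rule extractL[OF a b c cc r]) (use za zb zf2 in simp_all)
  then show ?thesis using zf2 by blast
qed

end

context group begin

lemma det:
  assumes al: "al \<in> carrier G" and be: "be \<in> carrier G" and c: "c \<in> carrier G"
    and cc: "\<And>g. g \<in> carrier G \<Longrightarrow> c \<otimes> g = g \<otimes> c"
    and ab: "al \<otimes> be = be \<otimes> al"
    and cN: "c [^] (N::int) = \<one>"
    and e1: "al = c [^] (w1::int) \<otimes> al [^] (p*i1) \<otimes> be [^] (p*j1)"
    and e2: "be = c [^] (w2::int) \<otimes> al [^] (p*i2) \<otimes> be [^] (p*j2)"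
  shows "al [^] (((p*i1 - 1)*(p*j2 - 1) - (p*i2)*(p*j1))*N) = \<one> \<and>
         be [^] (((p*i1 - 1)*(p*j2 - 1) - (p*i2)*(p*j1))*N) = \<one>"
proof -
  define E where "E = (\<lambda>w u v. c [^] (w::int) \<otimes> al [^] (u::int) \<otimes> be [^] (v::int))"
  have Ec: "\<And>w u v. E w u v \<in> carrier G" unfolding E_def using al be c by simp
  have one_c: "\<And>g. g \<in> carrier G \<Longrightarrow> \<one> \<otimes> g = g \<otimes> \<one>" by simp
  have r1: "al \<otimes> be = \<one> \<otimes> be \<otimes> al" using ab al be by simp
  have Emul: "\<And>w u v w' u' v'. E w u v \<otimes> E w' u' v' = E (w+w') (u+u') (v+v')"
    unfolding E_def using NFmul[OF al be c one_closed cc one_c r1] c by simp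
  have abp: "\<And>u v. al [^] (u::int) \<otimes> be [^] (v::int) = be [^] v \<otimes> al [^] u"
    using Kfull[OF al be one_closed one_c r1] al be by simp
  have Epow: "\<And>w u v t. (E w u v) [^] (t::int) = E (w*t) (u*t) (v*t)"
  proof -
    fix w u v t :: int
    have cm1: "c [^] w \<otimes> al [^] u = al [^] u \<otimes> c [^] w" using central_pow[OF c cc] al by simp
    have cm2: "(c [^] w \<otimes> al [^] u) \<otimes> be [^] v = be [^] v \<otimes> (c [^] w \<otimes> al [^] u)"
    proof -
      have "(c [^] w \<otimes> al [^] u) \<otimes> be [^] v = c [^] w \<otimes> (al [^] u \<otimes> be [^] v)" using al be c by (simp add: m_assoc)
      also have "\<dots> = c [^] w \<otimes> (be [^] v \<otimes> al [^] u)" using abp by simp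
      also have "\<dots> = (c [^] w \<otimes> be [^] v) \<otimes> al [^] u" using al be c by (simp add: m_assoc)
      also have "\<dots> = (be [^] v \<otimes> c [^] w) \<otimes> al [^] u" using central_pow[OF c cc, where i=w and g="be [^] v"] be by simp
      also have "\<dots> = be [^] v \<otimes> (c [^] w \<otimes> al [^] u)" using al be c by (simp add: m_assoc)
      finally show ?thesis .
    qed
    have "(E w u v) [^] t = (c [^] w \<otimes> al [^] u) [^] t \<otimes> (be [^] v) [^] t"
      unfolding E_def by (rule int_pow_mult_distrib[OF cm2]) (use al be c in auto)
    also have "(c [^] w \<otimes> al [^] u) [^] t = (c [^] w) [^] t \<otimes> (al [^] u) [^] t"
      by (rule int_pow_mult_distrib[OF cm1]) (use al c in auto)
    finally show "(E w u v) [^] t = E (w*t) (u*t) (v*t)" unfolding E_def using al be c by (simp add: int_pow_pow)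
  qed
  have al_E: "al = E 0 1 0" and be_E: "be = E 0 0 1" unfolding E_def using al be c by simp_all
  have E1: "E w1 (p*i1 - 1) (p*j1) = \<one>"
  proof -
    have "E w1 (p*i1 - 1) (p*j1) \<otimes> E 0 1 0 = E w1 (p*i1) (p*j1)" using Emul by simp
    also have "\<dots> = E 0 1 0" using e1 al_E unfolding E_def by simp
    finally show ?thesis using Ec by simp
  qed
  have E2: "E w2 (p*i2) (p*j2 - 1) = \<one>"
  proof -
    have "E w2 (p*i2) (p*j2 - 1) \<otimes> E 0 0 1 = E w2 (p*i2) (p*j2)" using Emul by simp
    also have "\<dots> = E 0 0 1" using e2 be_E unfolding E_def by simp
    finally show ?thesis using Ec by simp
  qed
  define u1 where "u1 = p*i1 - 1"
  define v1 where "v1 = p*j1"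
  define u2 where "u2 = p*i2"
  define v2 where "v2 = p*j2 - 1"
  define D where "D = u1*v2 - u2*v1"
  have cX: "\<And>Q. c [^] (Q * N) = \<one>"
  proof -
    fix Q :: int
    have "c [^] (Q * N) = (c [^] N) [^] Q" using c by (simp add: int_pow_pow mult.commute)
    then show "c [^] (Q * N) = \<one>" using cN by simp
  qed
  have A: "E ((w1*v2 - w2*v1)*N) (D*N) 0 = \<one>"
  proof -
    have "(E w1 u1 v1) [^] (v2*N) \<otimes> (E w2 u2 v2) [^] (-(v1*N)) = \<one>"
      using E1 E2 by (simp add: u1_def v1_def u2_def v2_def)
    moreover have "(E w1 u1 v1) [^] (v2*N) \<otimes> (E w2 u2 v2) [^] (-(v1*N))
       = E (w1*(v2*N) + w2*(-(v1*N))) (u1*(v2*N) + u2*(-(v1*N))) (v1*(v2*N) + v2*(-(v1*N)))"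
      by (simp only: Epow Emul)
    moreover have "w1*(v2*N) + w2*(-(v1*N)) = (w1*v2 - w2*v1)*N"
      and "u1*(v2*N) + u2*(-(v1*N)) = D*N" and "v1*(v2*N) + v2*(-(v1*N)) = 0"
      unfolding D_def by (simp_all add: algebra_simps)
    ultimately show ?thesis by simp
  qed
  have B: "E ((w2*u1 - w1*u2)*N) 0 (D*N) = \<one>"
  proof -
    have "(E w1 u1 v1) [^] (-(u2*N)) \<otimes> (E w2 u2 v2) [^] (u1*N) = \<one>"
      using E1 E2 by (simp add: u1_def v1_def u2_def v2_def)
    moreover have "(E w1 u1 v1) [^] (-(u2*N)) \<otimes> (E w2 u2 v2) [^] (u1*N)
       = E (w1*(-(u2*N)) + w2*(u1*N)) (u1*(-(u2*N)) + u2*(u1*N)) (v1*(-(u2*N)) + v2*(u1*N))"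
      by (simp only: Epow Emul)
    moreover have "w1*(-(u2*N)) + w2*(u1*N) = (w2*u1 - w1*u2)*N"
      and "u1*(-(u2*N)) + u2*(u1*N) = 0" and "v1*(-(u2*N)) + v2*(u1*N) = D*N"
      unfolding D_def by (simp_all add: algebra_simps)
    ultimately show ?thesis by simp
  qed
  have "al [^] (D*N) = \<one>" using A cX unfolding E_def using al be by simp
  moreover have "be [^] (D*N) = \<one>" using B cX unfolding E_def using al be by simp
  ultimately show ?thesis unfolding D_def u1_def v1_def u2_def v2_def by simp
qed

end

context group begin

lemma ordc_pos:
  assumes hyp: "\<And>H. subgroup H G \<Longrightarrow> \<not> abelian_set G H \<Longrightarrow> centralizer G H \<subseteq> H"
    and a: "a \<in> carrier G" and b: "b \<in> carrier G" and c: "c \<in> carrier G"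
    and cc: "\<And>g. g \<in> carrier G \<Longrightarrow> c \<otimes> g = g \<otimes> c"
    and r: "a \<otimes> b = c \<otimes> b \<otimes> a"
  shows "ord c \<noteq> 0"
proof (cases "c [^] ((2::int)*2) = \<one>")
  case T: True
  have 4: "int (ord c) dvd 2*2" using T c int_pow_eq_id by blast
  show ?thesis
  proof
    assume "ord c = 0"
    then show False using 4 by simp
  qed
next
  case F: False
  have ex: "\<exists>k i j. c = c [^] ((2::int)*2*k) \<otimes> a [^] (2*i) \<otimes> b [^] (2*j) \<and> int (ord c) dvd 2*i \<and> int (ord c) dvd 2*j"
    by (rule key[OF hyp a b c cc r F c cc[OF a] cc[OF b]])
  obtain k i j where z: "c = c [^] ((2::int)*2*k) \<otimes> a [^] (2*i) \<otimes> b [^] (2*j)"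
    and d1: "int (ord c) dvd 2*i" and d2: "int (ord c) dvd 2*j"
    using ex by blast
  show ?thesis
  proof
    assume o: "ord c = 0"
    then have "i = 0" "j = 0" using d1 d2 by auto
    then have "c [^] (1::int) = c [^] (2*2*k)" using z c by simp
    then have "int (ord c) dvd 2*2*k - 1" using c int_pow_eq by blast
    then have "2*2*k - 1 = (0::int)" using o by simp
    then show False by presburger
  qed
qed

lemma exists_M:
  assumes hyp: "\<And>H. subgroup H G \<Longrightarrow> \<not> abelian_set G H \<Longrightarrow> centralizer G H \<subseteq> H"
    and a: "a \<in> carrier G" and b: "b \<in> carrier G" and c: "c \<in> carrier G"
    and cc: "\<And>g. g \<in> carrier G \<Longrightarrow> c \<otimes> g = g \<otimes> c"
    and r: "a \<otimes> b = c \<otimes> b \<otimes> a" and c1: "c \<noteq> \<one>"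
  shows "\<exists>M::int. M \<noteq> 0 \<and> a [^] M = \<one> \<and> b [^] M = \<one> \<and> c [^] M = \<one>"
proof -
  define N where "N = int (ord c)"
  have Npos: "N > 0" using ordc_pos[OF hyp a b c cc r] N_def by simp
  define p where "p = N + 1"
  have cN: "c [^] N = \<one>" using c int_pow_eq_id N_def by simp
  have cNm: "c [^] (-N) = \<one>" using cN c by (simp add: int_pow_neg)
  have "c [^] (p*p) = c [^] (1::int)"
  proof -
    have "1 - p*p = N * (-(N+2))" unfolding p_def by (simp add: algebra_simps)
    then have "N dvd 1 - p*p" by simp
    then show ?thesis using c int_pow_eq N_def by blast
  qed
  then have cpp: "c [^] (p*p) \<noteq> \<one>" using c c1 by simp
  have cop: "coprime N p" unfolding p_def
    by (rule coprime_add_one_right)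
  define al where "al = a [^] N"
  define be where "be = b [^] N"
  have alc: "al \<in> carrier G" and bec: "be \<in> carrier G" using a b by (auto simp: al_def be_def)
  have ala: "al \<otimes> a = a \<otimes> al" unfolding al_def by (rule comm_pow1[OF a a refl])
  have alb: "al \<otimes> b = b \<otimes> al" unfolding al_def using Kgen[OF a b c cc r, of N] cN b a by simp
  have beb: "be \<otimes> b = b \<otimes> be" unfolding be_def by (rule comm_pow1[OF b b refl])
  have bea: "be \<otimes> a = a \<otimes> be"
  proof -
    have one_c: "\<one> \<in> carrier G" by simp
    have cc': "\<And>g. g \<in> carrier G \<Longrightarrow> c \<otimes> g = g \<otimes> c" by (rule cc)
    have "b [^] N \<otimes> a [^] (1::int) = c [^] (-(1*N)) \<otimes> a [^] (1::int) \<otimes> b [^] N"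
      by (rule swapg[OF a b c cc r])
    then show ?thesis unfolding be_def using cNm a b by simp
  qed
  have ab: "al \<otimes> be = be \<otimes> al"
  proof -
    have "a [^] N \<otimes> b [^] N = c [^] (N*N) \<otimes> b [^] N \<otimes> a [^] N" by (rule Kfull[OF a b c cc r])
    moreover have "c [^] (N*N) = \<one>" using cN c by (simp flip: int_pow_pow)
    ultimately show ?thesis unfolding al_def be_def using a b by simp
  qed
  have rew: "\<And>x i1. x \<in> carrier G \<Longrightarrow> x [^] (p*(N*i1)) = (x [^] N) [^] (p*i1)"
    by (simp add: int_pow_pow mult.left_commute)
  obtain k i j where z1: "al = c [^] (p*p*k) \<otimes> a [^] (p*i) \<otimes> b [^] (p*j)"
    and d1: "N dvd p*i" and d2: "N dvd p*j"
    using key[OF hyp a b c cc r cpp alc ala alb] N_def by blast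
  have "N dvd i" "N dvd j" using d1 d2 cop by (simp_all add: coprime_dvd_mult_right_iff)
  then obtain i1 j1 where "i = N*i1" "j = N*j1" by (auto elim!: dvdE)
  then have e1: "al = c [^] (p*p*k) \<otimes> al [^] (p*i1) \<otimes> be [^] (p*j1)"
    using z1 rew a b unfolding al_def be_def by simp
  obtain k' i' j' where z2: "be = c [^] (p*p*k') \<otimes> a [^] (p*i') \<otimes> b [^] (p*j')"
    and d1': "N dvd p*i'" and d2': "N dvd p*j'"
    using key[OF hyp a b c cc r cpp bec bea beb] N_def by blast
  have "N dvd i'" "N dvd j'" using d1' d2' cop by (simp_all add: coprime_dvd_mult_right_iff)
  then obtain i2 j2 where "i' = N*i2" "j' = N*j2" by (auto elim!: dvdE)
  then have e2: "be = c [^] (p*p*k') \<otimes> al [^] (p*i2) \<otimes> be [^] (p*j2)"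
    using z2 rew a b unfolding al_def be_def by simp
  define D where "D = (p*i1 - 1)*(p*j2 - 1) - (p*i2)*(p*j1)"
  have dd: "al [^] (D*N) = \<one> \<and> be [^] (D*N) = \<one>"
    unfolding D_def by (rule det[OF alc bec c cc ab cN e1 e2])
  have D0: "D \<noteq> 0"
  proof
    assume "D = 0"
    moreover have "D = 1 + p*(p*i1*j2 - i1 - j2 - p*i2*j1)" unfolding D_def by (simp add: algebra_simps)
    ultimately have "p * (-(p*i1*j2 - i1 - j2 - p*i2*j1)) = 1" by (simp add: algebra_simps)
    then have "p = 1 \<or> p = -1" by (auto simp: zmult_eq_1_iff)
    then show False using Npos p_def by simp
  qed
  define M where "M = N*(D*N)"
  have "a [^] M = \<one>" using dd a unfolding M_def al_def by (simp add: int_pow_pow)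
  moreover have "b [^] M = \<one>" using dd b unfolding M_def be_def by (simp add: int_pow_pow)
  moreover have "c [^] M = \<one>" using cN c unfolding M_def by (simp flip: int_pow_pow)
  moreover have "M \<noteq> 0" using D0 Npos unfolding M_def by simp
  ultimately show ?thesis by blast
qed

lemma pow_mod:
  assumes x: "x \<in> carrier G" and xM: "x [^] (M::int) = \<one>" and M: "M \<noteq> 0"
  shows "x [^] (k::int) = x [^] (k mod \<bar>M\<bar>)"
proof -
  have "int (ord x) dvd M" using x xM int_pow_eq_id by blast
  then have "int (ord x) dvd \<bar>M\<bar>" by simp
  moreover have "\<bar>M\<bar> dvd k mod \<bar>M\<bar> - k"
  proof -
    have "k mod \<bar>M\<bar> - k = \<bar>M\<bar> * (-(k div \<bar>M\<bar>))"
      using div_mult_mod_eq[of k "\<bar>M\<bar>"] by (simp add: algebra_simps)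
    then show ?thesis by simp
  qed
  ultimately have "int (ord x) dvd k mod \<bar>M\<bar> - k" by (rule dvd_trans)
  then show ?thesis using x int_pow_eq by blast
qed

lemma H0_finite:
  assumes a: "a \<in> carrier G" and b: "b \<in> carrier G" and c: "c \<in> carrier G"
    and cc: "\<And>g. g \<in> carrier G \<Longrightarrow> c \<otimes> g = g \<otimes> c"
    and r: "a \<otimes> b = c \<otimes> b \<otimes> a"
    and M: "M \<noteq> 0" and aM: "a [^] (M::int) = \<one>" and bM: "b [^] M = \<one>" and cM: "c [^] M = \<one>"
  shows "finite (generate G {a, b})"
proof -
  define S where "S = {0..<\<bar>M\<bar>}"
  have "generate G {a, b} \<subseteq> (\<lambda>(k, i, j). c [^] k \<otimes> a [^] i \<otimes> b [^] j) ` (S \<times> S \<times> S)"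
  proof
    fix h assume "h \<in> generate G {a, b}"
    then have "h \<in> NFset a b c" using NF[OF a b c cc r] by blast
    then obtain k i j where h: "h = c [^] (k::int) \<otimes> a [^] (i::int) \<otimes> b [^] (j::int)" unfolding NFset_def by blast
    have "h = c [^] (k mod \<bar>M\<bar>) \<otimes> a [^] (i mod \<bar>M\<bar>) \<otimes> b [^] (j mod \<bar>M\<bar>)"
      using h pow_mod[OF a aM M] pow_mod[OF b bM M] pow_mod[OF c cM M] by metis
    moreover have "(k mod \<bar>M\<bar>, i mod \<bar>M\<bar>, j mod \<bar>M\<bar>) \<in> S \<times> S \<times> S" using M unfolding S_def by simp
    ultimately show "h \<in> (\<lambda>(k, i, j). c [^] k \<otimes> a [^] i \<otimes> b [^] j) ` (S \<times> S \<times> S)"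
      by (intro image_eqI[where x="(k mod \<bar>M\<bar>, i mod \<bar>M\<bar>, j mod \<bar>M\<bar>)"]) auto
  qed
  moreover have "finite (S \<times> S \<times> S)" unfolding S_def by simp
  ultimately show ?thesis using finite_subset by blast
qed

end

context group begin

lemma comm_of_one:
  assumes u: "u \<in> carrier G" and v: "v \<in> carrier G" and e: "u \<otimes> v \<otimes> inv u \<otimes> inv v = \<one>"
  shows "u \<otimes> v = v \<otimes> u"
proof -
  have "u \<otimes> v \<otimes> inv u \<otimes> inv v \<otimes> v \<otimes> u = v \<otimes> u" using e u v by simp
  moreover have "u \<otimes> v \<otimes> inv u \<otimes> inv v \<otimes> v \<otimes> u = u \<otimes> v" using u v by (simp add: m_assoc)
  ultimately show ?thesis by simp
qed

lemma comm_rel: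
  assumes a: "a \<in> carrier G" and b: "b \<in> carrier G"
  shows "a \<otimes> b = (a \<otimes> b \<otimes> inv a \<otimes> inv b) \<otimes> b \<otimes> a"
  using a b by (simp add: m_assoc)

lemma exists_central_comm:
  assumes nil: "lower_central G n0 = {\<one>}" and x: "x \<in> carrier G" and y: "y \<in> carrier G"
    and nc: "x \<otimes> y \<noteq> y \<otimes> x"
  shows "\<exists>a\<in>carrier G. \<exists>b\<in>carrier G. a \<otimes> b \<otimes> inv a \<otimes> inv b \<noteq> \<one> \<and>
           (\<forall>g\<in>carrier G. (a \<otimes> b \<otimes> inv a \<otimes> inv b) \<otimes> g = g \<otimes> (a \<otimes> b \<otimes> inv a \<otimes> inv b))"
proof -
  define P where "P = (\<lambda>m. lower_central G (Suc m) = {\<one>})"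
  have xy1: "x \<otimes> y \<otimes> inv x \<otimes> inv y \<noteq> \<one>" using comm_of_one[OF x y] nc by blast
  have n0: "n0 \<noteq> 0"
  proof
    assume "n0 = 0"
    then have "carrier G = {\<one>}" using nil by simp
    then show False using x y nc by simp
  qed
  have "P (n0 - 1)" unfolding P_def using n0 nil by simp
  define m where "m = (LEAST m. P m)"
  have Pm: "P m" unfolding m_def by (rule LeastI) (fact)
  have m0: "m \<noteq> 0"
  proof
    assume "m = 0"
    then have "lower_central G 1 = {\<one>}" using Pm P_def by simp
    moreover have "x \<otimes> y \<otimes> inv x \<otimes> inv y \<in> lower_central G (Suc 0)"
      by (rule lc_conj) (use x y in simp_all)
    ultimately show False using xy1 by simp
  qed
  then obtain m' where mm: "m = Suc m'" by (cases m) auto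
  have nP: "\<not> P m'" unfolding m_def by (rule not_less_Least) (use mm m_def in simp)
  have "\<exists>a\<in>lower_central G m'. \<exists>b\<in>carrier G. a \<otimes> b \<otimes> inv a \<otimes> inv b \<noteq> \<one>"
  proof (rule ccontr)
    assume "\<not> ?thesis"
    then have S: "(\<Union>a \<in> lower_central G m'. \<Union>b \<in> carrier G. {a \<otimes> b \<otimes> inv a \<otimes> inv b}) \<subseteq> {\<one>}" by auto
    have "lower_central G (Suc m') \<subseteq> {\<one>}"
      unfolding lower_central.simps commutator_subgroup_def
      by (rule generate_subgroup_incl[OF S triv_subgroup])
    moreover have "\<one> \<in> lower_central G (Suc m')" using lc_sub subgroup.one_closed by blast
    ultimately have "P m'" unfolding P_def by blast
    then show False using nP by simp
  qed
  then obtain a b where a: "a \<in> lower_central G m'" and b: "b \<in> carrier G"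
    and c1: "a \<otimes> b \<otimes> inv a \<otimes> inv b \<noteq> \<one>" by blast
  have ac: "a \<in> carrier G" using a lc_carrier by blast
  define cv where "cv = a \<otimes> b \<otimes> inv a \<otimes> inv b"
  have cvc: "cv \<in> carrier G" using ac b cv_def by simp
  have cin: "cv \<in> lower_central G m" using lc_conj[OF a b] mm cv_def by simp
  have cc: "cv \<otimes> g = g \<otimes> cv" if g: "g \<in> carrier G" for g
  proof -
    have "cv \<otimes> g \<otimes> inv cv \<otimes> inv g \<in> lower_central G (Suc m)"
      by (rule lc_conj[OF cin g])
    then have "cv \<otimes> g \<otimes> inv cv \<otimes> inv g = \<one>"
      using Pm P_def by simp
    then show ?thesis by (rule comm_of_one[OF cvc g])
  qed
  note cc = cc[unfolded cv_def]
  show ?thesis using ac b c1 cc by blast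
qed

lemma main_group:
  assumes nil: "lower_central G n0 = {\<one>}"
    and hyp: "\<And>H. subgroup H G \<Longrightarrow> \<not> abelian_set G H \<Longrightarrow> centralizer G H \<subseteq> H"
  shows "comm_group G \<or> finite (carrier G)"
  proof (cases "\<forall>x\<in>carrier G. \<forall>y\<in>carrier G. x \<otimes> y = y \<otimes> x")
    case T: True
    have "comm_group G"
    proof (rule group_comm_groupI)
      fix x y assume "x \<in> carrier G" "y \<in> carrier G"
      then show "x \<otimes> y = y \<otimes> x" using T by simp
    qed
    then show ?thesis by simp
  next
    case F: False
    from F obtain x y where x: "x \<in> carrier G" and y: "y \<in> carrier G" and nc: "x \<otimes> y \<noteq> y \<otimes> x" by blast
    from exists_central_comm[OF nil x y nc] obtain a where a: "a \<in> carrier G" and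
      exb: "\<exists>b\<in>carrier G. a \<otimes> b \<otimes> inv a \<otimes> inv b \<noteq> \<one> \<and>
           (\<forall>g\<in>carrier G. (a \<otimes> b \<otimes> inv a \<otimes> inv b) \<otimes> g = g \<otimes> (a \<otimes> b \<otimes> inv a \<otimes> inv b))"
      by (rule bexE)
    from exb obtain b where b: "b \<in> carrier G" and
      cb: "a \<otimes> b \<otimes> inv a \<otimes> inv b \<noteq> \<one> \<and>
           (\<forall>g\<in>carrier G. (a \<otimes> b \<otimes> inv a \<otimes> inv b) \<otimes> g = g \<otimes> (a \<otimes> b \<otimes> inv a \<otimes> inv b))"
      by (rule bexE)
    from cb have c1: "a \<otimes> b \<otimes> inv a \<otimes> inv b \<noteq> \<one>" by (rule conjunct1)
    from cb have cc0: "\<forall>g\<in>carrier G. (a \<otimes> b \<otimes> inv a \<otimes> inv b) \<otimes> g = g \<otimes> (a \<otimes> b \<otimes> inv a \<otimes> inv b)"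
      by (rule conjunct2)
    define c where "c = a \<otimes> b \<otimes> inv a \<otimes> inv b"
    have c: "c \<in> carrier G" using a b c_def by simp
    have cc: "\<And>g. g \<in> carrier G \<Longrightarrow> c \<otimes> g = g \<otimes> c" unfolding c_def using cc0 by (rule bspec)
    have r: "a \<otimes> b = c \<otimes> b \<otimes> a" unfolding c_def by (rule comm_rel[OF a b])
    have c1': "c \<noteq> \<one>" unfolding c_def by (rule c1)
    from exists_M[OF hyp a b c cc r c1'] obtain M :: int where
      Mall: "M \<noteq> 0 \<and> a [^] M = \<one> \<and> b [^] M = \<one> \<and> c [^] M = \<one>" by (rule exE)
    have M: "M \<noteq> 0" and aM: "a [^] M = \<one>" and bM: "b [^] M = \<one>" and cM: "c [^] M = \<one>"
      using Mall by blast+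
    have fin: "finite (generate G {a, b})" by (rule H0_finite[OF a b c cc r M aM bM cM])
    have sub: "subgroup (generate G {a, b}) G" using a b by (intro generate_is_subgroup) auto
    have nab: "\<not> abelian_set G (generate G {a, b})"
    proof
      assume "abelian_set G (generate G {a, b})"
      then have "a \<otimes> b = b \<otimes> a" unfolding abelian_set_def
        using generate.incl[of a "{a,b}" G] generate.incl[of b "{a,b}" G] by blast
      then have ab: "a \<otimes> b = b \<otimes> a" .
      have "c = b \<otimes> a \<otimes> inv a \<otimes> inv b" unfolding c_def by (simp only: ab)
      also have "\<dots> = b \<otimes> (a \<otimes> inv a) \<otimes> inv b" using a b by (simp only: m_assoc inv_closed)
      also have "\<dots> = \<one>" using a b by simp
      finally have "c = \<one>" .
      then show False using c1' by simp
    qed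
    have "finite (carrier G)" by (rule chain_final[OF sub nab fin hyp nil])
    then show ?thesis by simp
  qed

end

theorem theorem3p1:
  fixes G :: "('a, 'b) monoid_scheme"
  assumes "nilpotent_group G"
    and "\<And>H. subgroup H G \<Longrightarrow> \<not> abelian_set G H \<Longrightarrow> centralizer G H \<subseteq> H"
  shows "comm_group G \<or> finite (carrier G)"
proof -
  have grp: "group G" and "\<exists>n. lower_central G n = {\<one>\<^bsub>G\<^esub>}" using assms(1) unfolding nilpotent_group_def by auto
  then obtain n0 where nil: "lower_central G n0 = {\<one>\<^bsub>G\<^esub>}" by blast
  show ?thesis by (rule group.main_group[OF grp nil assms(2)])
qed


end
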